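(* If $F$ has a derivative $F'(x_0)$ at a nega-$\tilde Q$-irrational point $x_0=\Delta^{-\tilde Q}_{i_1(x_0)i_2(x_0)\dots}$, then $$F'(x_0)=\lim_{n\to\infty}\prod_{j=1}^{n}\frac{\tilde p_{i_j(x_0),j}}{\tilde q_{i_j(x_0),j}}=\prod_{n=1}^{\infty}\frac{\tilde p_{i_n(x_0),n}}{\tilde q_{i_n(x_0),n}}.$$
   Context: Let $(m_n)_{n\ge1}$ be finite nonnegative integers and $\tilde Q=\|q_{i,n}\|$ ($i\in\{0,\dots,m_n\}$) with $q_{i,n}>0$, $\sum_{i}q_{i,n}=1$ for all $n$, and $\prod_n q_{i_n,n}=0$ for every digit sequence $(i_n)$. Put $a_{0,n}=0$, $a_{i,n}=\sum_{l<i}q_{l,n}$; $\Delta^{\tilde Q}_{j_1j_2\dots}=a_{j_1,1}+\sum_{n\ge2}a_{j_n,n}\prod_{l<n}q_{j_l,l}$. For odd $n$: $\tilde q_{i,n}=q_{i,n}$; for even $n$: $\tilde q_{i,n}=q_{m_n-i,n}$. The nega-$\tilde Q$-representation $x=\Delta^{-\tilde Q}_{i_1i_2\dots}$ means $x=\Delta^{\tilde Q}_{i_1[m_2-i_2]i_3[m_4-i_4]\dots}$; every $x\in[0,1]$ has one; numbers $\Delta^{-\tilde Q}_{i_1\dots i_nm_{n+1}0m_{n+3}0\dots}=\Delta^{-\tilde Q}_{i_1\dots[i_n-1]0m_{n+2}0m_{n+4}\dots}$ ($i_n\ne0$) have two representations and are nega-$\tilde Q$-rational; all other points have a unique representation and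 are nega-$\tilde Q$-irrational. Let $P=\|p_{i,n}\|$ have the same shape with $p_{i,n}\in(-1,1)$, $\sum_ip_{i,n}=1$, $\prod_n|p_{i_n,n}|=0$ for every digit sequence, $0<\sum_{i<c}p_{i,n}<1$ for $c\in\{1,\dots,m_n\}$. Put $\beta_{0,n}=0$, $\beta_{c,n}=\sum_{i<c}p_{i,n}$; for odd $n$: $\tilde p_{i,n}=p_{i,n}$, $\tilde\beta_{i,n}=\beta_{i,n}$; for even $n$: $\tilde p_{i,n}=p_{m_n-i,n}$, $\tilde\beta_{i,n}=\beta_{m_n-i,n}$. $F(x)=\beta_{i_1,1}+\sum_{k\ge2}\tilde\beta_{i_k,k}\prod_{j<k}\tilde p_{i_j,j}$ for $x=\Delta^{-\tilde Q}_{i_1i_2\dots}$. *)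

theory Defs
  imports "HOL-Analysis.Analysis"
begin

text \<open>Matrices are functions q i n (digit i, position n); positions start at n = 1.
  A digit sequence d :: nat => nat is used only at positions n >= 1.\<close>

definition a_coef :: "(nat \<Rightarrow> nat \<Rightarrow> real) \<Rightarrow> nat \<Rightarrow> nat \<Rightarrow> real" where
  "a_coef q i n = (\<Sum>l<i. q l n)"

definition DeltaQ :: "(nat \<Rightarrow> nat \<Rightarrow> real) \<Rightarrow> (nat \<Rightarrow> nat) \<Rightarrow> real" where
  "DeltaQ q d = a_coef q (d 1) 1 +
     (\<Sum>k. a_coef q (d (k+2)) (k+2) * (\<Prod>l\<in>{1..k+1}. q (d l) l))"

definition nega_digits :: "(nat \<Rightarrow> nat) \<Rightarrow> (nat \<Rightarrow> nat) \<Rightarrow> nat \<Rightarrow> nat" where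
  "nega_digits m d n = (if odd n then d n else m n - d n)"

definition is_digit_seq :: "(nat \<Rightarrow> nat) \<Rightarrow> (nat \<Rightarrow> nat) \<Rightarrow> bool" where
  "is_digit_seq m d \<longleftrightarrow> (\<forall>n\<ge>1. d n \<le> m n)"

definition nega_rep :: "(nat \<Rightarrow> nat) \<Rightarrow> (nat \<Rightarrow> nat \<Rightarrow> real) \<Rightarrow> (nat \<Rightarrow> nat) \<Rightarrow> real \<Rightarrow> bool" where
  "nega_rep m q d x \<longleftrightarrow> is_digit_seq m d \<and> x = DeltaQ q (nega_digits m d)"

definition nega_irrational :: "(nat \<Rightarrow> nat) \<Rightarrow> (nat \<Rightarrow> nat \<Rightarrow> real) \<Rightarrow> real \<Rightarrow> bool" where
  "nega_irrational m q x \<longleftrightarrow> x \<in> {0..1} \<and>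
     (\<forall>d d'. nega_rep m q d x \<longrightarrow> nega_rep m q d' x \<longrightarrow> (\<forall>n\<ge>1. d n = d' n))"

definition tilde :: "(nat \<Rightarrow> nat) \<Rightarrow> (nat \<Rightarrow> nat \<Rightarrow> real) \<Rightarrow> nat \<Rightarrow> nat \<Rightarrow> real" where
  "tilde m r i n = (if odd n then r i n else r (m n - i) n)"

definition beta_coef :: "(nat \<Rightarrow> nat \<Rightarrow> real) \<Rightarrow> nat \<Rightarrow> nat \<Rightarrow> real" where
  "beta_coef p c n = (\<Sum>i<c. p i n)"

definition F_fun :: "(nat \<Rightarrow> nat) \<Rightarrow> (nat \<Rightarrow> nat \<Rightarrow> real) \<Rightarrow> (nat \<Rightarrow> nat \<Rightarrow> real) \<Rightarrow> real \<Rightarrow> real" where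
  "F_fun m q p x = (let d = (SOME d. nega_rep m q d x) in
     beta_coef p (d 1) 1 +
     (\<Sum>k. tilde m (beta_coef p) (d (k+2)) (k+2) * (\<Prod>j\<in>{1..k+1}. tilde m p (d j) j)))"

end

theory Submission imports Defs begin


definition Pr :: "(nat \<Rightarrow> nat \<Rightarrow> real) \<Rightarrow> (nat \<Rightarrow> nat) \<Rightarrow> nat \<Rightarrow> real" where
  "Pr r e n = (\<Prod>j\<in>{1..n}. r (e j) j)"
definition Sm :: "(nat \<Rightarrow> nat \<Rightarrow> real) \<Rightarrow> (nat \<Rightarrow> nat) \<Rightarrow> nat \<Rightarrow> real" where
  "Sm r e n = (\<Sum>k\<in>{1..n}. beta_coef r (e k) k * Pr r e (k - 1))"
definition Val :: "(nat \<Rightarrow> nat \<Rightarrow> real) \<Rightarrow> (nat \<Rightarrow> nat) \<Rightarrow> real" where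
  "Val r e = beta_coef r (e 1) 1 + (\<Sum>k. beta_coef r (e (k+2)) (k+2) * Pr r e (k+1))"

lemma Pr_0[simp]: "Pr r e 0 = 1" by (simp add: Pr_def)
lemma Pr_Suc: "Pr r e (Suc n) = Pr r e n * r (e (Suc n)) (Suc n)"
  by (simp add: Pr_def)
lemma Sm_0[simp]: "Sm r e 0 = 0" by (simp add: Sm_def)
lemma Sm_Suc: "Sm r e (Suc n) = Sm r e n + beta_coef r (e (Suc n)) (Suc n) * Pr r e n"
  by (simp add: Sm_def)
lemma beta_Suc: "beta_coef r (Suc c) n = beta_coef r c n + r c n" by (simp add: beta_coef_def)
lemma beta_0[simp]: "beta_coef r 0 n = 0" by (simp add: beta_coef_def)

lemma Val_lim: assumes "Sm r e \<longlonglongrightarrow> L" shows "Val r e = L"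
proof -
  let ?f = "\<lambda>k. beta_coef r (e (k+2)) (k+2) * Pr r e (k+1)"
  let ?c = "beta_coef r (e 1) 1"
  have ps: "?c + (\<Sum>k<N. ?f k) = Sm r e (Suc N)" for N
  proof (induction N)
    case 0 show ?case using Sm_Suc[of r e 0] by simp
  next
    case (Suc N)
    have "?c + (\<Sum>k<Suc N. ?f k) = Sm r e (Suc N) + ?f N" using Suc by simp
    also have "\<dots> = Sm r e (Suc (Suc N))" using Sm_Suc[of r e "Suc N"]
      by (simp add: numeral_2_eq_2)
    finally show ?case .
  qed
  have "(\<lambda>N. Sm r e (Suc N)) \<longlonglongrightarrow> L" using LIMSEQ_Suc[OF assms] .
  then have "(\<lambda>N. ?c + (\<Sum>k<N. ?f k)) \<longlonglongrightarrow> L" using ps by simp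
  then have "(\<lambda>N. ?c + (\<Sum>k<N. ?f k) - ?c) \<longlonglongrightarrow> L - ?c"
    by (intro tendsto_diff tendsto_const)
  then have "?f sums (L - ?c)" unfolding sums_def by simp
  then show ?thesis unfolding Val_def by (simp add: sums_unique[symmetric])
qed

lemma conv01: "0\<le>b \<Longrightarrow> b\<le>1 \<Longrightarrow> 0\<le>t \<Longrightarrow> t\<le>1 \<Longrightarrow> 0\<le>t' \<Longrightarrow> t'\<le>1 \<Longrightarrow>
   0 \<le> t + b*(t'-t) \<and> t + b*(t'-t) \<le> (1::real)"
proof -
  assume a: "0\<le>b" "b\<le>1" "0\<le>t" "t\<le>1" "0\<le>t'" "t'\<le>1"
  have e: "t + b*(t'-t) = (1-b)*t + b*t'" by (simp add: algebra_simps)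
  have "(1-b)*t \<le> 1-b" using a by (simp add: mult_left_le)
  moreover have "b*t' \<le> b" using a by (simp add: mult_left_le)
  moreover have "0 \<le> (1-b)*t" "0 \<le> b*t'" using a by auto
  ultimately show ?thesis unfolding e by linarith
qed

definition Hb :: "(nat \<Rightarrow> nat) \<Rightarrow> (nat \<Rightarrow> nat \<Rightarrow> real) \<Rightarrow> bool" where
  "Hb m r \<longleftrightarrow> (\<forall>n\<ge>1. \<forall>c\<le>Suc (m n). 0 \<le> beta_coef r c n \<and> beta_coef r c n \<le> 1)"

lemma nest:
  assumes H: "Hb m r" and v: "is_digit_seq m e" and nN: "n \<le> N"
  shows "\<exists>t. 0\<le>t \<and> t\<le>1 \<and> Sm r e N = Sm r e n + t * Pr r e n \<and>
          (\<exists>t'. 0\<le>t' \<and> t'\<le>1 \<and> Sm r e N + Pr r e N = Sm r e n + t' * Pr r e n)"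
  using nN
proof (induction N rule: dec_induct)
  case base
  show ?case by (rule exI[of _ 0]) (auto intro!: exI[of _ 1])
next
  case (step N)
  then obtain t t' where tt: "0\<le>t" "t\<le>1" "Sm r e N = Sm r e n + t * Pr r e n"
    "0\<le>t'" "t'\<le>1" "Sm r e N + Pr r e N = Sm r e n + t' * Pr r e n" by blast
  let ?b = "beta_coef r (e (Suc N)) (Suc N)"
  let ?b' = "beta_coef r (Suc (e (Suc N))) (Suc N)"
  have le: "e (Suc N) \<le> m (Suc N)" using v unfolding is_digit_seq_def by auto
  have b: "0 \<le> ?b" "?b \<le> 1" "0 \<le> ?b'" "?b' \<le> 1" using H le unfolding Hb_def by auto
  have PN: "Pr r e N = (t' - t) * Pr r e n" using tt by (simp add: algebra_simps)
  have "Sm r e (Suc N) = Sm r e N + ?b * Pr r e N" by (rule Sm_Suc)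
  also have "\<dots> = Sm r e n + t * Pr r e n + ?b * ((t' - t) * Pr r e n)" by (simp only: tt(3) PN)
  also have "\<dots> = Sm r e n + (t + ?b*(t'-t)) * Pr r e n" by (simp add: algebra_simps)
  finally have s1: "Sm r e (Suc N) = Sm r e n + (t + ?b*(t'-t)) * Pr r e n" .
  have "Sm r e (Suc N) + Pr r e (Suc N) = Sm r e N + ?b' * Pr r e N"
    unfolding Sm_Suc Pr_Suc beta_Suc by (simp add: algebra_simps)
  also have "\<dots> = Sm r e n + t * Pr r e n + ?b' * ((t' - t) * Pr r e n)" by (simp only: tt(3) PN)
  also have "\<dots> = Sm r e n + (t + ?b'*(t'-t)) * Pr r e n" by (simp add: algebra_simps)
  finally have s2: "Sm r e (Suc N) + Pr r e (Suc N) = Sm r e n + (t + ?b'*(t'-t)) * Pr r e n" .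
  show ?case using s1 s2 conv01[OF b(1,2) tt(1,2,4,5)] conv01[OF b(3,4) tt(1,2,4,5)]
    by blast
qed

lemma Sm_close:
  assumes "Hb m r" "is_digit_seq m e" "n \<le> N"
  shows "\<bar>Sm r e N - Sm r e n\<bar> \<le> \<bar>Pr r e n\<bar>"
proof -
  obtain t where t: "0\<le>t" "t\<le>1" "Sm r e N = Sm r e n + t * Pr r e n" using nest[OF assms] by blast
  have "\<bar>t * Pr r e n\<bar> = t * \<bar>Pr r e n\<bar>" using t by (simp add: abs_mult)
  also have "\<dots> \<le> \<bar>Pr r e n\<bar>" using t by (simp add: mult_left_le_one_le)
  finally show ?thesis using t by simp
qed

lemma Sm_conv:
  assumes H: "Hb m r" and v: "is_digit_seq m e" and P: "Pr r e \<longlonglongrightarrow> 0"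
  shows "convergent (Sm r e)"
proof -
  have "Cauchy (Sm r e)"
  proof (rule metric_CauchyI)
    fix eps :: real assume "0 < eps"
    then have "eps/2 > 0" by simp
    from LIMSEQ_D[OF P this] obtain M where M: "\<forall>n\<ge>M. norm (Pr r e n - 0) < eps/2" by blast
    have "\<forall>a\<ge>M. \<forall>b\<ge>M. dist (Sm r e a) (Sm r e b) < eps"
    proof (intro allI impI)
      fix a b assume "M \<le> a" "M \<le> b"
      have "\<bar>Sm r e a - Sm r e M\<bar> \<le> \<bar>Pr r e M\<bar>" "\<bar>Sm r e b - Sm r e M\<bar> \<le> \<bar>Pr r e M\<bar>"
        using Sm_close[OF H v] \<open>M \<le> a\<close> \<open>M \<le> b\<close> by auto
      moreover have "\<bar>Pr r e M\<bar> < eps/2" using M by auto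
      ultimately show "dist (Sm r e a) (Sm r e b) < eps" unfolding dist_real_def by linarith
    qed
    then show "\<exists>M. \<forall>a\<ge>M. \<forall>b\<ge>M. dist (Sm r e a) (Sm r e b) < eps" by blast
  qed
  then show ?thesis using Cauchy_convergent_iff by blast
qed

lemma deriv_squeeze:
  fixes f :: "real \<Rightarrow> real"
  assumes d: "(f has_real_derivative D) (at x within S)"
    and ab: "\<forall>n. a n \<le> x \<and> x \<le> b n \<and> a n < b n \<and> a n \<in> S \<and> b n \<in> S"
    and l: "(\<lambda>n. b n - a n) \<longlonglongrightarrow> 0"
  shows "(\<lambda>n. (f (b n) - f (a n)) / (b n - a n)) \<longlonglongrightarrow> D"
proof (rule LIMSEQ_I)
  fix r :: real assume r: "0 < r"
  have "(f has_derivative (\<lambda>h. D * h)) (at x within S)" using d by (simp add: has_field_derivative_def)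
  then obtain del where del: "del > 0" "\<forall>y\<in>S. norm (y - x) < del \<longrightarrow>
      norm (f y - f x - D * (y - x)) \<le> (r/2) * norm (y - x)"
    unfolding has_derivative_within_alt using r by (meson half_gt_zero)
  obtain no where no: "\<forall>n\<ge>no. norm (b n - a n - 0) < del" using LIMSEQ_D[OF l del(1)] by blast
  have "norm ((f (b n) - f (a n)) / (b n - a n) - D) < r" if "n \<ge> no" for n
  proof -
    have h: "a n \<le> x" "x \<le> b n" "a n < b n" "a n \<in> S" "b n \<in> S" using ab by auto
    have bd: "b n - a n < del" using no that by auto
    have 1: "\<bar>f (b n) - f x - D * (b n - x)\<bar> \<le> (r/2) * (b n - x)"
      using del(2) h bd by (auto dest!: bspec[of _ _ "b n"])
    have 2: "\<bar>f (a n) - f x - D * (a n - x)\<bar> \<le> (r/2) * (x - a n)"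
      using del(2) h bd by (auto dest!: bspec[of _ _ "a n"])
    have "\<bar>f (b n) - f (a n) - D * (b n - a n)\<bar> \<le> (r/2) * (b n - a n)"
    proof -
      have "f (b n) - f (a n) - D * (b n - a n) = (f (b n) - f x - D * (b n - x)) - (f (a n) - f x - D * (a n - x))"
        by (simp add: algebra_simps)
      then have "\<bar>f (b n) - f (a n) - D * (b n - a n)\<bar> \<le> \<bar>f (b n) - f x - D * (b n - x)\<bar> + \<bar>f (a n) - f x - D * (a n - x)\<bar>"
        using abs_triangle_ineq4 by metis
      also have "\<dots> \<le> (r/2) * (b n - x) + (r/2) * (x - a n)" using 1 2 by linarith
      also have "\<dots> = (r/2) * (b n - a n)" by (simp add: field_simps)
      finally show ?thesis .
    qed
    moreover have "(r/2) * (b n - a n) < r * (b n - a n)" using r h by simp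
    ultimately have "\<bar>f (b n) - f (a n) - D * (b n - a n)\<bar> < r * (b n - a n)" by linarith
    moreover have "(f (b n) - f (a n)) / (b n - a n) - D = (f (b n) - f (a n) - D * (b n - a n)) / (b n - a n)"
      using h by (simp add: field_simps)
    ultimately show ?thesis using h by (simp add: abs_divide pos_divide_less_eq)
  qed
  then show "\<exists>no. \<forall>n\<ge>no. norm ((f (b n) - f (a n)) / (b n - a n) - D) < r" by blast
qed



lemma Pr_cong: "(\<And>j. 1 \<le> j \<Longrightarrow> j \<le> n \<Longrightarrow> e j = e' j) \<Longrightarrow> Pr r e n = Pr r e' n"
  unfolding Pr_def by (rule prod.cong) auto

lemma Sm_cong: assumes "\<And>j. 1 \<le> j \<Longrightarrow> j \<le> n \<Longrightarrow> e j = e' j" shows "Sm r e n = Sm r e' n"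
  unfolding Sm_def
proof (rule sum.cong)
  fix k assume "k \<in> {1..n}"
  then show "beta_coef r (e k) k * Pr r e (k - 1) = beta_coef r (e' k) k * Pr r e' (k - 1)"
    using assms Pr_cong[of "k-1" e e' r] by auto
qed simp

lemma Val_cong: assumes "\<And>j. 1 \<le> j \<Longrightarrow> e j = e' j" shows "Val r e = Val r e'"
proof -
  have "\<And>k. Pr r e (k+1) = Pr r e' (k+1)" using Pr_cong assms by blast
  then show ?thesis unfolding Val_def using assms[of 1] assms[of "k+2" for k] by simp
qed

lemma tilde_nd: "tilde m r (d j) j = r (nega_digits m d j) j"
  by (simp add: tilde_def nega_digits_def)

lemma DeltaQ_Val: "DeltaQ q e = Val q e"
  by (simp add: DeltaQ_def Val_def Pr_def a_coef_def beta_coef_def)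

lemma F_Val: "F_fun m q p x = Val p (nega_digits m (SOME d. nega_rep m q d x))"
  unfolding F_fun_def Let_def Val_def Pr_def tilde_nd
  by (simp add: nega_digits_def)

locale setting =
  fixes m :: "nat \<Rightarrow> nat" and q p :: "nat \<Rightarrow> nat \<Rightarrow> real"
  assumes q_pos: "\<forall>n\<ge>1. \<forall>i\<le>m n. q i n > 0"
    and q_sum: "\<forall>n\<ge>1. (\<Sum>i\<le>m n. q i n) = 1"
    and q_prod: "\<forall>e. is_digit_seq m e \<longrightarrow> (\<lambda>n. \<Prod>j\<in>{1..n}. q (e j) j) \<longlonglongrightarrow> 0"
    and p_bnd: "\<forall>n\<ge>1. \<forall>i\<le>m n. -1 < p i n \<and> p i n < 1"
    and p_sum: "\<forall>n\<ge>1. (\<Sum>i\<le>m n. p i n) = 1"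
    and p_prod: "\<forall>e. is_digit_seq m e \<longrightarrow> (\<lambda>n. \<Prod>j\<in>{1..n}. \<bar>p (e j) j\<bar>) \<longlonglongrightarrow> 0"
    and p_partial: "\<forall>n\<ge>1. \<forall>c\<in>{1..m n}. 0 < (\<Sum>i<c. p i n) \<and> (\<Sum>i<c. p i n) < 1"
begin

lemma bq_full: "n \<ge> 1 \<Longrightarrow> beta_coef q (Suc (m n)) n = 1"
  using q_sum by (simp add: beta_coef_def lessThan_Suc_atMost)
lemma bp_full: "n \<ge> 1 \<Longrightarrow> beta_coef p (Suc (m n)) n = 1"
  using p_sum by (simp add: beta_coef_def lessThan_Suc_atMost)

lemma Hq: "Hb m q"
  unfolding Hb_def
proof (intro allI impI conjI)
  fix n c assume n: "1 \<le> n" and c: "c \<le> Suc (m n)"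
  show "0 \<le> beta_coef q c n" unfolding beta_coef_def
    using q_pos n c by (intro sum_nonneg) (auto intro: less_imp_le)
  have "beta_coef q c n \<le> beta_coef q (Suc (m n)) n" unfolding beta_coef_def
    using q_pos n c by (intro sum_mono2) (auto intro: less_imp_le)
  then show "beta_coef q c n \<le> 1" using bq_full n by simp
qed

lemma Hp: "Hb m p"
  unfolding Hb_def
proof (intro allI impI)
  fix n c assume n: "1 \<le> n" and c: "c \<le> Suc (m n)"
  show "0 \<le> beta_coef p c n \<and> beta_coef p c n \<le> 1"
  proof (cases "c = 0")
    case True then show ?thesis by simp
  next
    case False
    show ?thesis
    proof (cases "c = Suc (m n)")
      case True then show ?thesis using bp_full n by simp
    next
      case False
      then have "c \<in> {1..m n}" using c \<open>c \<noteq> 0\<close> by auto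
      then have "0 < (\<Sum>i<c. p i n) \<and> (\<Sum>i<c. p i n) < 1" using p_partial n by blast
      then show ?thesis unfolding beta_coef_def by linarith
    qed
  qed
qed

lemma Prq_tend: "is_digit_seq m e \<Longrightarrow> Pr q e \<longlonglongrightarrow> 0"
  using q_prod unfolding Pr_def by blast

lemma Prp_tend: "is_digit_seq m e \<Longrightarrow> Pr p e \<longlonglongrightarrow> 0"
proof -
  assume "is_digit_seq m e"
  then have "(\<lambda>n. \<bar>Pr p e n\<bar>) \<longlonglongrightarrow> 0" using p_prod unfolding Pr_def by (simp add: abs_prod)
  then show ?thesis by (simp add: tendsto_rabs_zero_iff)
qed

lemma Prq_pos: "is_digit_seq m e \<Longrightarrow> Pr q e n > 0"
  unfolding Pr_def is_digit_seq_def using q_pos by (intro prod_pos) auto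

lemma Sm_tend: assumes "Hb m r" "is_digit_seq m e" "Pr r e \<longlonglongrightarrow> 0" shows "Sm r e \<longlonglongrightarrow> Val r e"
proof -
  obtain L where "Sm r e \<longlonglongrightarrow> L" using Sm_conv[OF assms] convergent_def by blast
  then have "Val r e = L" by (rule Val_lim)
  then show ?thesis using \<open>Sm r e \<longlonglongrightarrow> L\<close> by simp
qed

lemma Valq_bnd: assumes v: "is_digit_seq m e"
  shows "Sm q e n \<le> Val q e" "Val q e \<le> Sm q e n + Pr q e n"
proof -
  have T: "Sm q e \<longlonglongrightarrow> Val q e" using Sm_tend[OF Hq v Prq_tend[OF v]] .
  have b: "Sm q e n \<le> Sm q e N \<and> Sm q e N \<le> Sm q e n + Pr q e n" if nN: "n \<le> N" for N
  proof -
    obtain t where t: "0\<le>t" "t\<le>1" "Sm q e N = Sm q e n + t * Pr q e n" using nest[OF Hq v nN] by blast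
    have "0 \<le> t * Pr q e n" "t * Pr q e n \<le> Pr q e n" using t Prq_pos[OF v, of n]
      by (auto simp: mult_left_le_one_le)
    then show ?thesis using t by simp
  qed
  have ev1: "\<exists>N0. \<forall>N\<ge>N0. Sm q e n \<le> Sm q e N" using b by blast
  have ev2: "\<exists>N0. \<forall>N\<ge>N0. Sm q e N \<le> Sm q e n + Pr q e n" using b by blast
  show "Sm q e n \<le> Val q e" by (rule LIMSEQ_le_const[OF T ev1])
  show "Val q e \<le> Sm q e n + Pr q e n" by (rule LIMSEQ_le_const2[OF T ev2])
qed

lemma bq_strict: "n \<ge> 1 \<Longrightarrow> c < c' \<Longrightarrow> c' \<le> Suc (m n) \<Longrightarrow> beta_coef q c n < beta_coef q c' n"
proof (induction c')
  case 0 then show ?case by simp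
next
  case (Suc c')
  have "q c' n > 0" using q_pos Suc.prems by auto
  then have "beta_coef q c' n < beta_coef q (Suc c') n" by (simp add: beta_Suc)
  moreover have "beta_coef q c n \<le> beta_coef q c' n"
    using Suc by (cases "c = c'") (auto intro: less_imp_le)
  ultimately show ?case by linarith
qed

lemma bq_inj: "n \<ge> 1 \<Longrightarrow> c \<le> Suc (m n) \<Longrightarrow> c' \<le> Suc (m n) \<Longrightarrow> beta_coef q c n = beta_coef q c' n \<Longrightarrow> c = c'"
  using bq_strict[of n c c'] bq_strict[of n c' c] by (cases c c' rule: linorder_cases) auto

lemma bq_mono: "n \<ge> 1 \<Longrightarrow> c \<le> c' \<Longrightarrow> c' \<le> Suc (m n) \<Longrightarrow> beta_coef q c n \<le> beta_coef q c' n"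
  using bq_strict[of n c c'] by (cases "c = c'") auto

lemma lim_const_tail:
  fixes X :: "nat \<Rightarrow> real"
  assumes "X \<longlonglongrightarrow> L" "\<forall>N\<ge>k. X N = C" shows "L = C"
proof -
  have "(\<lambda>n. X (n + k)) \<longlonglongrightarrow> L" using assms(1) by (rule LIMSEQ_ignore_initial_segment)
  moreover have "(\<lambda>n. X (n + k)) = (\<lambda>n. C)" using assms(2) by auto
  ultimately have "(\<lambda>n. C) \<longlonglongrightarrow> L" by simp
  then have "C = L" by (rule LIMSEQ_unique[OF tendsto_const])
  then show ?thesis by simp
qed

lemma wd_core:
  assumes ve: "is_digit_seq m e" and ve': "is_digit_seq m e'" and X: "Val q e = Val q e'"
    and pre: "\<forall>j\<in>{1..k0}. e j = e' j" and lt: "e (Suc k0) < e' (Suc k0)"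
  shows "Val p e = Val p e'"
proof -
  define k where "k = Suc k0"
  have PrEq: "Pr r e k0 = Pr r e' k0" for r using pre by (intro Pr_cong) auto
  have SmEq: "Sm r e k0 = Sm r e' k0" for r using pre by (intro Sm_cong) auto
  have hk: "e k \<le> m k" "e' k \<le> m k" using ve ve' unfolding is_digit_seq_def k_def by auto
  have k1: "k \<ge> 1" unfolding k_def by simp
  define Xv where "Xv = Val q e"
  have Pq: "Pr q e k0 > 0" using Prq_pos[OF ve] .
  define b1 where "b1 = beta_coef q (Suc (e k)) k"
  define b2 where "b2 = beta_coef q (e' k) k"
  have A: "Xv \<le> Sm q e k + Pr q e k" using Valq_bnd[OF ve] unfolding Xv_def by blast
  have B: "Sm q e k + Pr q e k = Sm q e k0 + Pr q e k0 * b1"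
    unfolding k_def b1_def Sm_Suc Pr_Suc beta_Suc by (simp add: algebra_simps)
  have C: "b1 \<le> b2" unfolding b1_def b2_def using lt hk k1 by (intro bq_mono) (auto simp: k_def)
  have D: "Sm q e' k = Sm q e k0 + Pr q e k0 * b2"
  proof -
    have "Sm q e' k = Sm q e' k0 + beta_coef q (e' k) k * Pr q e' k0" unfolding k_def by (rule Sm_Suc)
    then show ?thesis unfolding b2_def using SmEq[of q] PrEq[of q] by (simp add: mult.commute)
  qed
  have E: "Sm q e' k \<le> Xv" using Valq_bnd[OF ve'] X unfolding Xv_def by simp
  have "Pr q e k0 * b1 \<le> Pr q e k0 * b2" using C Pq by simp
  then have eqs: "Pr q e k0 * b1 = Pr q e k0 * b2" "Xv = Sm q e k + Pr q e k" "Xv = Sm q e' k"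
    using A B D E by linarith+
  then have "b1 = b2" using Pq by simp
  then have ek: "e' k = Suc (e k)" unfolding b1_def b2_def using bq_inj[OF k1, of "e' k" "Suc (e k)"] hk by simp
  have T1: "Sm q e N + Pr q e N = Xv \<and> Sm p e N + Pr p e N = Sm p e k + Pr p e k" if "k \<le> N" for N
    using that
  proof (induction N rule: dec_induct)
    case base then show ?case using eqs by simp
  next
    case (step N)
    have N1: "Suc N \<ge> 1" by simp
    have le: "e (Suc N) \<le> m (Suc N)" using ve unfolding is_digit_seq_def by auto
    let ?b = "beta_coef q (Suc (e (Suc N))) (Suc N)"
    have s: "Sm q e (Suc N) + Pr q e (Suc N) = Sm q e N + Pr q e N * ?b"
      unfolding Sm_Suc Pr_Suc beta_Suc by (simp add: algebra_simps)
    have "?b \<le> 1" using Hq le unfolding Hb_def by auto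
    then have "Pr q e N * ?b \<le> Pr q e N" using Prq_pos[OF ve, of N] by (simp add: mult_left_le)
    moreover have "Xv \<le> Sm q e (Suc N) + Pr q e (Suc N)" using Valq_bnd[OF ve] unfolding Xv_def by blast
    ultimately have "Pr q e N * ?b = Pr q e N" using s step.IH by linarith
    then have "?b = 1" using Prq_pos[OF ve, of N] by simp
    then have "?b = beta_coef q (Suc (m (Suc N))) (Suc N)" using bq_full[OF N1] by simp
    then have "Suc (e (Suc N)) = Suc (m (Suc N))" using bq_inj[OF N1, of "Suc (e (Suc N))" "Suc (m (Suc N))"] le by simp
    then have eN: "e (Suc N) = m (Suc N)" by simp
    have "Sm p e (Suc N) + Pr p e (Suc N) = Sm p e N + Pr p e N * beta_coef p (Suc (m (Suc N))) (Suc N)"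
      unfolding Sm_Suc Pr_Suc beta_Suc eN by (simp add: algebra_simps)
    also have "\<dots> = Sm p e N + Pr p e N" using bp_full[OF N1] by simp
    finally show ?case using s step.IH \<open>Pr q e N * ?b = Pr q e N\<close> by simp
  qed
  have Vp: "Val p e = Sm p e k + Pr p e k"
  proof (rule lim_const_tail)
    show "(\<lambda>N. Sm p e N + Pr p e N) \<longlonglongrightarrow> Val p e"
      using tendsto_add[OF Sm_tend[OF Hp ve Prp_tend[OF ve]] Prp_tend[OF ve]] by simp
    show "\<forall>N\<ge>k. Sm p e N + Pr p e N = Sm p e k + Pr p e k" using T1 by blast
  qed
  have T2: "Sm q e' N = Xv \<and> Sm p e' N = Sm p e' k" if "k \<le> N" for N
    using that
  proof (induction N rule: dec_induct)
    case base then show ?case using eqs by simp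
  next
    case (step N)
    have N1: "Suc N \<ge> 1" by simp
    have le: "e' (Suc N) \<le> m (Suc N)" using ve' unfolding is_digit_seq_def by auto
    let ?b = "beta_coef q (e' (Suc N)) (Suc N)"
    have "0 \<le> ?b" using Hq le unfolding Hb_def by auto
    then have "0 \<le> ?b * Pr q e' N" using Prq_pos[OF ve', of N] by simp
    moreover have "Sm q e' (Suc N) \<le> Xv" using Valq_bnd[OF ve'] X unfolding Xv_def by simp
    ultimately have "?b * Pr q e' N = 0" using step.IH unfolding Sm_Suc by linarith
    then have "?b = 0" using Prq_pos[OF ve', of N] by simp
    then have "?b = beta_coef q 0 (Suc N)" by simp
    then have eN: "e' (Suc N) = 0" using bq_inj[OF N1, of "e' (Suc N)" 0] le by simp
    show ?case using step.IH \<open>?b * Pr q e' N = 0\<close> unfolding Sm_Suc eN by simp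
  qed
  have Vp': "Val p e' = Sm p e' k"
  proof (rule lim_const_tail)
    show "Sm p e' \<longlonglongrightarrow> Val p e'" using Sm_tend[OF Hp ve' Prp_tend[OF ve']] .
    show "\<forall>N\<ge>k. Sm p e' N = Sm p e' k" using T2 by blast
  qed
  have "Sm p e k + Pr p e k = Sm p e k0 + Pr p e k0 * beta_coef p (Suc (e k)) k"
    unfolding k_def Sm_Suc Pr_Suc beta_Suc by (simp add: algebra_simps)
  also have "\<dots> = Sm p e' k0 + beta_coef p (e' k) k * Pr p e' k0"
    using SmEq[of p] PrEq[of p] ek by (simp add: mult.commute)
  also have "\<dots> = Sm p e' k" unfolding k_def by (rule Sm_Suc[symmetric])
  finally have "Sm p e k + Pr p e k = Sm p e' k" .
  then show ?thesis using Vp Vp' by linarith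
qed

lemma wd:
  assumes ve: "is_digit_seq m e" and ve': "is_digit_seq m e'" and X: "Val q e = Val q e'"
  shows "Val p e = Val p e'"
proof (cases "\<forall>n\<ge>1. e n = e' n")
  case True then show ?thesis by (intro Val_cong) auto
next
  case False
  define k where "k = (LEAST n. 1 \<le> n \<and> e n \<noteq> e' n)"
  have ex: "\<exists>n. 1 \<le> n \<and> e n \<noteq> e' n" using False by auto
  have k: "1 \<le> k \<and> e k \<noteq> e' k" unfolding k_def by (rule LeastI_ex[OF ex])
  then obtain k0 where k0: "k = Suc k0" by (cases k) auto
  have pre: "\<forall>j\<in>{1..k0}. e j = e' j"
  proof
    fix j assume "j \<in> {1..k0}"
    then have "j < k" "1 \<le> j" using k0 by auto
    then show "e j = e' j" using not_less_Least[of j "\<lambda>n. 1 \<le> n \<and> e n \<noteq> e' n"] unfolding k_def by blast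
  qed
  show ?thesis
  proof (cases "e k < e' k")
    case True then show ?thesis using wd_core[OF ve ve' X pre] k0 by simp
  next
    case False
    then have "e' k < e k" using k by simp
    moreover have "\<forall>j\<in>{1..k0}. e' j = e j" using pre by simp
    ultimately show ?thesis using wd_core[OF ve' ve X[symmetric]] k0 by simp
  qed
qed

end


lemma valid_nd: "is_digit_seq m d \<Longrightarrow> is_digit_seq m (nega_digits m d)"
  unfolding is_digit_seq_def nega_digits_def by auto

lemma lo_Sm: assumes "n \<le> N" shows "Sm r (\<lambda>j. if j \<le> n then e j else 0) N = Sm r e n"
  using assms
proof (induction N rule: dec_induct)
  case base then show ?case by (intro Sm_cong) auto
next
  case (step N) then show ?case by (simp add: Sm_Suc)
qed

lemma hi_Sm: assumes full: "\<forall>j\<ge>1. beta_coef r (Suc (m j)) j = 1" and "n \<le> N"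
  shows "Sm r (\<lambda>j. if j \<le> n then e j else m j) N + Pr r (\<lambda>j. if j \<le> n then e j else m j) N
        = Sm r e n + Pr r e n"
  using assms(2)
proof (induction N rule: dec_induct)
  case base
  have "Sm r (\<lambda>j. if j \<le> n then e j else m j) n = Sm r e n" by (intro Sm_cong) auto
  moreover have "Pr r (\<lambda>j. if j \<le> n then e j else m j) n = Pr r e n" by (intro Pr_cong) auto
  ultimately show ?case by simp
next
  case (step N)
  let ?h = "\<lambda>j. if j \<le> n then e j else m j"
  have "Sm r ?h (Suc N) + Pr r ?h (Suc N) = Sm r ?h N + Pr r ?h N * beta_coef r (Suc (m (Suc N))) (Suc N)"
  proof -
    have "\<not> Suc N \<le> n" using \<open>n \<le> N\<close> by simp
    then show ?thesis unfolding Sm_Suc Pr_Suc beta_Suc by (simp add: algebra_simps)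
  qed
  also have "\<dots> = Sm r ?h N + Pr r ?h N" using full by simp
  finally show ?case using step by simp
qed

context setting begin

lemma F_at: assumes v: "is_digit_seq m e'" shows "F_fun m q p (Val q e') = Val p e'"
proof -
  define d' where "d' = nega_digits m e'"
  have vd': "is_digit_seq m d'" unfolding d'_def by (rule valid_nd[OF v])
  have "\<And>j. 1 \<le> j \<Longrightarrow> nega_digits m d' j = e' j"
    using v unfolding d'_def nega_digits_def is_digit_seq_def by auto
  then have "Val q (nega_digits m d') = Val q e'" by (rule Val_cong)
  then have "nega_rep m q d' (Val q e')" unfolding nega_rep_def DeltaQ_Val using vd' by simp
  then have r: "nega_rep m q (SOME d. nega_rep m q d (Val q e')) (Val q e')" by (rule someI[where P="\<lambda>d. nega_rep m q d (Val q e')"])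
  define ds where "ds = (SOME d. nega_rep m q d (Val q e'))"
  have vs: "is_digit_seq m (nega_digits m ds)" using r valid_nd unfolding ds_def nega_rep_def by blast
  have "Val q (nega_digits m ds) = Val q e'" using r unfolding ds_def nega_rep_def DeltaQ_Val by simp
  then have "Val p (nega_digits m ds) = Val p e'" by (rule wd[OF vs v])
  then show ?thesis unfolding F_Val ds_def by simp
qed

lemma lo_val: "Val r (\<lambda>j. if j \<le> n then e j else 0) = Sm r e n"
proof (rule Val_lim, rule LIMSEQ_offset[where k = n])
  show "(\<lambda>N. Sm r (\<lambda>j. if j \<le> n then e j else 0) (N + n)) \<longlonglongrightarrow> Sm r e n"
    using lo_Sm[of n] by simp
qed

lemma hi_val:
  assumes v: "is_digit_seq m e" and H: "Hb m r" and full: "\<forall>j\<ge>1. beta_coef r (Suc (m j)) j = 1"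
    and P: "Pr r (\<lambda>j. if j \<le> n then e j else m j) \<longlonglongrightarrow> 0"
  shows "Val r (\<lambda>j. if j \<le> n then e j else m j) = Sm r e n + Pr r e n"
proof -
  let ?h = "\<lambda>j. if j \<le> n then e j else m j"
  have vh: "is_digit_seq m ?h" using v unfolding is_digit_seq_def by auto
  show ?thesis
  proof (rule lim_const_tail)
    show "(\<lambda>N. Sm r ?h N + Pr r ?h N) \<longlonglongrightarrow> Val r ?h"
      using tendsto_add[OF Sm_tend[OF H vh P] P] by simp
    show "\<forall>N\<ge>n. Sm r ?h N + Pr r ?h N = Sm r e n + Pr r e n" using hi_Sm[OF full] by blast
  qed
qed

end

theorem mainTheorem8:
  fixes m :: "nat \<Rightarrow> nat" and q p :: "nat \<Rightarrow> nat \<Rightarrow> real"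
    and x0 D :: real and d :: "nat \<Rightarrow> nat"
  assumes q_pos: "\<forall>n\<ge>1. \<forall>i\<le>m n. q i n > 0"
    and q_sum: "\<forall>n\<ge>1. (\<Sum>i\<le>m n. q i n) = 1"
    and q_prod: "\<forall>e. is_digit_seq m e \<longrightarrow> (\<lambda>n. \<Prod>j\<in>{1..n}. q (e j) j) \<longlonglongrightarrow> 0"
    and p_bnd: "\<forall>n\<ge>1. \<forall>i\<le>m n. -1 < p i n \<and> p i n < 1"
    and p_sum: "\<forall>n\<ge>1. (\<Sum>i\<le>m n. p i n) = 1"
    and p_prod: "\<forall>e. is_digit_seq m e \<longrightarrow> (\<lambda>n. \<Prod>j\<in>{1..n}. \<bar>p (e j) j\<bar>) \<longlonglongrightarrow> 0"
    and p_partial: "\<forall>n\<ge>1. \<forall>c\<in>{1..m n}. 0 < (\<Sum>i<c. p i n) \<and> (\<Sum>i<c. p i n) < 1"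
    and irr: "nega_irrational m q x0"
    and rep: "nega_rep m q d x0"
    and deriv: "(F_fun m q p has_real_derivative D) (at x0 within {0..1})"
  shows "(\<lambda>n. \<Prod>j\<in>{1..n}. tilde m p (d j) j / tilde m q (d j) j) \<longlonglongrightarrow> D"
proof -
  interpret setting m q p
    by (intro setting.intro q_pos q_sum q_prod p_bnd p_sum p_prod p_partial)
  define e where "e = nega_digits m d"
  have ve: "is_digit_seq m e" using rep valid_nd unfolding e_def nega_rep_def by blast
  have x0: "x0 = Val q e" using rep unfolding nega_rep_def e_def DeltaQ_Val by simp
  define a where "a n = Sm q e n" for n
  define b where "b n = Sm q e n + Pr q e n" for n
  have vlo: "is_digit_seq m (\<lambda>j. if j \<le> n then e j else 0)" for n
    using ve unfolding is_digit_seq_def by auto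
  have vhi: "is_digit_seq m (\<lambda>j. if j \<le> n then e j else m j)" for n
    using ve unfolding is_digit_seq_def by auto
  have Fa: "F_fun m q p (a n) = Sm p e n" for n
    using F_at[OF vlo[of n]] lo_val[of q n e] lo_val[of p n e] unfolding a_def by simp
  have Fb: "F_fun m q p (b n) = Sm p e n + Pr p e n" for n
  proof -
    have "Val q (\<lambda>j. if j \<le> n then e j else m j) = b n" unfolding b_def
      using hi_val[OF ve Hq _ Prq_tend[OF vhi]] bq_full by simp
    moreover have "Val p (\<lambda>j. if j \<le> n then e j else m j) = Sm p e n + Pr p e n"
      using hi_val[OF ve Hp _ Prp_tend[OF vhi]] bp_full by simp
    ultimately show ?thesis using F_at[OF vhi[of n]] by simp
  qed
  have ab: "\<forall>n. a n \<le> x0 \<and> x0 \<le> b n \<and> a n < b n \<and> a n \<in> {0..1} \<and> b n \<in> {0..1}"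
  proof
    fix n
    obtain t where t: "0\<le>t" "t\<le>1" "Sm q e n = Sm q e 0 + t * Pr q e 0"
      "\<exists>t'. 0\<le>t' \<and> t'\<le>1 \<and> Sm q e n + Pr q e n = Sm q e 0 + t' * Pr q e 0"
      using nest[OF Hq ve, of 0 n] by blast
    show "a n \<le> x0 \<and> x0 \<le> b n \<and> a n < b n \<and> a n \<in> {0..1} \<and> b n \<in> {0..1}"
      using t Valq_bnd[OF ve, of n] Prq_pos[OF ve, of n] x0 unfolding a_def b_def by auto
  qed
  have l: "(\<lambda>n. b n - a n) \<longlonglongrightarrow> 0" unfolding a_def b_def using Prq_tend[OF ve] by simp
  have "(\<lambda>n. (F_fun m q p (b n) - F_fun m q p (a n)) / (b n - a n)) \<longlonglongrightarrow> D"
    by (rule deriv_squeeze[OF deriv ab l])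
  moreover have "(\<lambda>n. (F_fun m q p (b n) - F_fun m q p (a n)) / (b n - a n)) =
      (\<lambda>n. \<Prod>j\<in>{1..n}. tilde m p (d j) j / tilde m q (d j) j)"
    unfolding Fa Fb tilde_nd prod_dividef by (simp add: a_def b_def Pr_def e_def)
  ultimately show ?thesis by simp
qed


end
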